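(* Let $R$ be a finite set with $|R|=k$ and two binary operations $\oplus,\odot$, with structure matrices $M_\oplus,M_\odot\in\mathcal L_{k\times k^2}$, so that $\vec{x\oplus y}=M_\oplus\ltimes x\ltimes y$ and $\vec{x\odot y}=M_\odot\ltimes x\ltimes y$ for the vector forms $x,y\in\Delta_k$. Then: (i) $\oplus$ is commutative iff $M_\oplus=M_\oplus W_{[k,k]}$; (ii) $\oplus$ is associative iff $M_\oplus\ltimes M_\oplus=M_\oplus(I_k\otimes M_\oplus)$; (iii) $\delta_k^k$ is the identity for $\oplus$ iff $M_\oplus\ltimes\delta_k^k=M_\oplus W_{[k,k]}\ltimes\delta_k^k=I_k$; (iv) $(R,\oplus)$ has inverses iff there exists a unary operation $\neg$ on $R$, with structure matrix $M_\neg\in\mathcal L_{k\times k}$, such that $M_\oplus(I_k\otimes M_\neg)\mathrm{PR}_k=\delta_k^k\mathbf 1_k^T$; (v) $\odot$ is associative iff $M_\odot\ltimes M_\odot=M_\odot(I_k\otimes M_\odot)$; (vi) $\delta_k^1$ is the identity for $\odot$ iff $M_\odot\ltimes\delta_k^1=M_\odot W_{[k,k]}\ltimes\delta_k^1=I_k$; (vii) both distributive laws hold iff (a) $M_\odot\ltimes M_\oplus=M_\oplus\ltimes M_\odot\ltimes(I_{k^2}\otimes M_\odot)\ltimes(I_k\otimes W_{[k,k]})\ltimes(I_{k^2}\otimes\mathrm{PR}_k)$ and (b) $M_\odot(I_k\otimes M_\oplus)=M_\oplus\ltimes M_\odot\ltimes(I_{k^2}\otimes M_\odot)\ltimes(I_k\otimes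 W_{[k,k]})\ltimes\mathrm{PR}_k$.
   Context: Semi-tensor product: for $A\in\mathcal M_{m\times n}$, $B\in\mathcal M_{p\times q}$ and $t=\mathrm{lcm}(n,p)$, $A\ltimes B:=(A\otimes I_{t/n})(B\otimes I_{t/p})$; all matrix products above are semi-tensor products. $\delta_k^i$ is the $i$-th column of $I_k$, $\Delta_k=\{\delta_k^1,\dots,\delta_k^k\}$, and $\mathcal L_{m\times n}$ is the set of $m\times n$ matrices all of whose columns lie in $\Delta_m$. Elements of $R$ are labeled $1,2,\dots,k-1,0$ and represented in vector form by $i\mapsto\delta_k^i$ ($1\le i\le k-1$), $0\mapsto\delta_k^k$; by convention $\delta_k^1$ represents the candidate multiplicative identity $\mathbf 1$ and $\delta_k^k$ the candidate additive identity $\mathbf 0$. The swap matrix is $W_{[m,n]}=[I_n\otimes\delta_m^1,\dots,I_n\otimes\delta_m^m]$ (so $W_{[m,n]}xy=yx$ for $x\in\mathbb R^m,y\in\mathbb R^n$); the power-reducing matrix is $\mathrm{PR}_k=\mathrm{diag}(\delta_k^1,\dots,\delta_k^k)\in\mathcal L_{k^2\times k}$ (so $\mathrm{PR}_kx=x\ltimes x$ for $x\in\Delta_k$); $\mathbf 1_k$ is the all-ones column vector of length $k$. *)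

theory Defs
  imports "Jordan_Normal_Form.Matrix"
begin

definition kron :: "real mat \<Rightarrow> real mat \<Rightarrow> real mat" where
  "kron A B = mat (dim_row A * dim_row B) (dim_col A * dim_col B)
     (\<lambda>(i, j). A $$ (i div dim_row B, j div dim_col B) * B $$ (i mod dim_row B, j mod dim_col B))"

definition stp :: "real mat \<Rightarrow> real mat \<Rightarrow> real mat" (infixl "\<ltimes>" 70) where
  "stp A B = (let n = dim_col A; p = dim_row B; t = lcm n p
              in kron A (1\<^sub>m (t div n)) * kron B (1\<^sub>m (t div p)))"

text \<open>delta k i: the i-th column of I_k (1-based i), as a k x 1 matrix.\<close>
definition dlt :: "nat \<Rightarrow> nat \<Rightarrow> real mat" where
  "dlt k i = mat k 1 (\<lambda>(r, c). if r = i - 1 then 1 else 0)"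

definition logical_mat :: "nat \<Rightarrow> nat \<Rightarrow> real mat \<Rightarrow> bool" where
  "logical_mat m n A \<longleftrightarrow> dim_row A = m \<and> dim_col A = n \<and>
     (\<forall>j<n. \<exists>i\<in>{1..m}. col A j = col (dlt m i) 0)"

text \<open>Swap matrix W_[m,n] = [I_n \<otimes> delta_m^1, ..., I_n \<otimes> delta_m^m] (entrywise):
  column c = i*n+j (0-based, i<m, j<n) is delta at row j*m+i.\<close>
definition swap_mat :: "nat \<Rightarrow> nat \<Rightarrow> real mat" where
  "swap_mat m n = mat (m * n) (m * n)
     (\<lambda>(r, c). if r = (c mod n) * m + c div n then 1 else 0)"

text \<open>Power-reducing matrix PR_k = diag(delta_k^1, ..., delta_k^k) (k^2 x k).\<close>
definition pr_mat :: "nat \<Rightarrow> real mat" where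
  "pr_mat k = mat (k * k) k (\<lambda>(r, c). if r = c * k + c then 1 else 0)"

definition ones :: "nat \<Rightarrow> real mat" where
  "ones k = mat k 1 (\<lambda>_. 1)"

end

theory Submission
  imports Defs
begin


definition Lm :: "nat \<Rightarrow> nat \<Rightarrow> (nat \<Rightarrow> nat) \<Rightarrow> real mat" where
  "Lm m n f = mat m n (\<lambda>(i,j). if i = f j then 1 else 0)"
definition rng :: "nat \<Rightarrow> nat \<Rightarrow> (nat \<Rightarrow> nat) \<Rightarrow> bool" where
  "rng m n f \<longleftrightarrow> (\<forall>j<n. f j < m)"
definition kronf :: "nat \<Rightarrow> nat \<Rightarrow> (nat \<Rightarrow> nat) \<Rightarrow> (nat \<Rightarrow> nat) \<Rightarrow> nat \<Rightarrow> nat" where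
  "kronf p q f g j = f (j div q) * p + g (j mod q)"
definition stpf :: "nat \<Rightarrow> (nat \<Rightarrow> nat) \<Rightarrow> (nat \<Rightarrow> nat) \<Rightarrow> nat \<Rightarrow> nat" where
  "stpf r f g j = f (g (j div r) * r + j mod r)"

lemma Lm_dims[simp]: "dim_row (Lm m n f) = m" "dim_col (Lm m n f) = n"
  by (auto simp: Lm_def)

lemma Lm_mult: assumes "rng n q g" shows "Lm m n f * Lm n q g = Lm m q (\<lambda>j. f (g j))"
proof (rule eq_matI)
  fix i j assume "i < dim_row (Lm m q (\<lambda>j. f (g j)))" "j < dim_col (Lm m q (\<lambda>j. f (g j)))"
  hence ij: "i < m" "j < q" by auto
  have gj: "g j < n" using assms ij by (auto simp: rng_def)
  have "(Lm m n f * Lm n q g) $$ (i,j) = (\<Sum>l\<in>{0..<n}. (if i = f l then 1 else 0) * (if l = g j then 1 else 0))"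
    using ij by (simp add: Lm_def index_mult_mat scalar_prod_def)
  also have "\<dots> = (\<Sum>l\<in>{0..<n}. if l = g j then (if i = f (g j) then 1 else 0) else 0)"
    by (rule sum.cong) auto
  also have "\<dots> = (if i = f (g j) then 1 else 0)" using gj by (simp add: sum.delta)
  finally show "(Lm m n f * Lm n q g) $$ (i,j) = Lm m q (\<lambda>j. f (g j)) $$ (i,j)"
    using ij by (simp add: Lm_def)
qed (auto)

lemma divmod_lt: assumes "(b::nat) < c" shows "(a*c+b) div c = a" "(a*c+b) mod c = b"
  using assms by auto

lemma kron_Lm: assumes "rng p q g" "0 < p" "0 < q"
  shows "kron (Lm m n f) (Lm p q g) = Lm (m*p) (n*q) (kronf p q f g)"
proof (rule eq_matI)
  fix i j assume "i < dim_row (Lm (m*p) (n*q) (kronf p q f g))" "j < dim_col (Lm (m*p) (n*q) (kronf p q f g))"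
  hence ij: "i < m*p" "j < n*q" by auto
  have a: "i div p < m" using ij by (simp add: less_mult_imp_div_less)
  have b: "j div q < n" using ij by (simp add: less_mult_imp_div_less)
  have gq: "g (j mod q) < p" using assms by (auto simp: rng_def)
  have "(i div p = f (j div q) \<and> i mod p = g (j mod q)) \<longleftrightarrow> i = kronf p q f g j"
  proof
    assume "i div p = f (j div q) \<and> i mod p = g (j mod q)"
    thus "i = kronf p q f g j" unfolding kronf_def by (metis div_mult_mod_eq)
  next
    assume "i = kronf p q f g j"
    thus "i div p = f (j div q) \<and> i mod p = g (j mod q)" unfolding kronf_def using gq divmod_lt by auto
  qed
  thus "kron (Lm m n f) (Lm p q g) $$ (i,j) = Lm (m*p) (n*q) (kronf p q f g) $$ (i,j)"
    using ij a b assms by (auto simp: kron_def Lm_def)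
qed (auto simp: kron_def)

lemma one_Lm: "1\<^sub>m n = Lm n n (\<lambda>j. j)"
  by (rule eq_matI) (auto simp: Lm_def)

lemma rng_id: "rng n n (\<lambda>j. j)" by (simp add: rng_def)

lemma rng_kronf: assumes "rng m n f" "rng p q g"
  shows "rng (m*p) (n*q) (kronf p q f g)"
  unfolding rng_def kronf_def
proof (intro allI impI)
  fix j assume j: "j < n*q"
  hence q: "0 < q" by (cases q) auto
  have "j div q < n" using j by (simp add: less_mult_imp_div_less)
  hence a: "f (j div q) + 1 \<le> m" using assms(1) by (auto simp: rng_def)
  have b: "g (j mod q) < p" using assms(2) q by (auto simp: rng_def)
  have "f (j div q) * p + g (j mod q) < f (j div q) * p + p" using b by simp
  also have "\<dots> = (f (j div q) + 1) * p" by simp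
  also have "\<dots> \<le> m * p" using a by (rule mult_right_mono) simp
  finally show "f (j div q) * p + g (j mod q) < m * p" .
qed

lemma rng_comp: "rng m n f \<Longrightarrow> rng n q g \<Longrightarrow> rng m q (\<lambda>j. f (g j))"
  by (auto simp: rng_def)

lemma rng_stpf: assumes "rng m n f" "rng p q g" "n = p*r" "q' = q*r"
  shows "rng m q' (stpf r f g)"
proof -
  have "rng (p*r) (q*r) (kronf r r g (\<lambda>j. j))" by (rule rng_kronf[OF assms(2) rng_id])
  hence "rng m (q*r) (\<lambda>j. f (kronf r r g (\<lambda>j. j) j))" using assms rng_comp by metis
  thus ?thesis using assms by (simp add: stpf_def[abs_def] kronf_def)
qed

lemma kronf_1: "kronf (Suc 0) (Suc 0) f (\<lambda>j. j) = f" by (simp add: kronf_def fun_eq_iff)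

lemma stp_Lm: assumes "rng p q g" "n = p*r" "0 < p" "0 < r" "q' = q*r"
  shows "Lm m n f \<ltimes> Lm p q g = Lm m q' (stpf r f g)"
proof -
  have l: "lcm n p = n" using assms by simp
  have n0: "0 < n" using assms by simp
  have "kron (Lm m n f) (1\<^sub>m 1) = Lm m n f"
    unfolding one_Lm by (subst kron_Lm) (auto simp: rng_def kronf_1)
  moreover have "kron (Lm p q g) (1\<^sub>m r) = Lm n (q*r) (kronf r r g (\<lambda>j. j))"
    unfolding one_Lm using assms by (subst kron_Lm) (auto simp: rng_def)
  moreover have "rng n (q*r) (kronf r r g (\<lambda>j. j))"
    using rng_kronf[OF assms(1) rng_id, of r] assms by simp
  ultimately show ?thesis unfolding stp_def Let_def using l n0 assms
    by (simp add: Lm_mult stpf_def[abs_def] kronf_def)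
qed

lemma Lm_eq: assumes "rng m n f"
  shows "Lm m n f = Lm m n g \<longleftrightarrow> (\<forall>j<n. f j = g j)"
proof
  assume e: "Lm m n f = Lm m n g"
  show "\<forall>j<n. f j = g j"
  proof (intro allI impI)
    fix j assume j: "j < n"
    have "f j < m" using assms j by (auto simp: rng_def)
    hence "Lm m n f $$ (f j, j) = 1" "Lm m n g $$ (f j, j) = (if f j = g j then 1 else 0)"
      using j by (auto simp: Lm_def)
    thus "f j = g j" using e by (auto split: if_splits)
  qed
next
  assume "\<forall>j<n. f j = g j"
  thus "Lm m n f = Lm m n g" by (intro eq_matI) (auto simp: Lm_def)
qed

lemma dlt_Lm: "dlt k i = Lm k 1 (\<lambda>_. i - 1)"
  by (rule eq_matI) (auto simp: dlt_def Lm_def)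

lemma swap_Lm: "swap_mat m n = Lm (m*n) (m*n) (\<lambda>c. (c mod n) * m + c div n)"
  by (rule eq_matI) (auto simp: swap_mat_def Lm_def)

lemma rng_swap: "rng (m*n) (m*n) (\<lambda>c. (c mod n) * m + c div n)"
proof -
  show ?thesis unfolding rng_def
  proof (intro allI impI)
    fix c assume c: "c < m*n"
    hence n: "0 < n" by (cases n) auto
    have a: "c div n < m" using c by (simp add: less_mult_imp_div_less)
    have b: "c mod n + 1 \<le> n" using n by (simp add: Suc_leI)
    have "(c mod n) * m + c div n < (c mod n) * m + m" using a by simp
    also have "\<dots> = (c mod n + 1) * m" by simp
    also have "\<dots> \<le> n * m" using b by (rule mult_right_mono) simp
    finally show "(c mod n) * m + c div n < m * n" by (simp add: mult.commute)
  qed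
qed

lemma pr_Lm: "pr_mat k = Lm (k*k) k (\<lambda>c. c*k + c)"
  by (rule eq_matI) (auto simp: pr_mat_def Lm_def)

lemma rng_pr: "rng (k*k) k (\<lambda>c. c*k + c)"
proof -
  show ?thesis unfolding rng_def
  proof (intro allI impI)
    fix c assume c: "c < k"
    have "c*k + c < c*k + k" using c by simp
    also have "\<dots> = (c+1)*k" by simp
    also have "\<dots> \<le> k*k" using c by (intro mult_right_mono) auto
    finally show "c*k + c < k*k" .
  qed
qed

lemma ones_Lm: "transpose_mat (ones k) = Lm 1 k (\<lambda>_. 0)"
  by (rule eq_matI) (auto simp: ones_def Lm_def)

lemma logical_Lm: assumes "logical_mat m n A" shows "\<exists>f. rng m n f \<and> A = Lm m n f"
proof -
  have d: "dim_row A = m" "dim_col A = n" and c: "\<forall>j<n. \<exists>i\<in>{1..m}. col A j = col (dlt m i) 0"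
    using assms by (auto simp: logical_mat_def)
  obtain h where h: "\<forall>j<n. h j \<in> {1..m} \<and> col A j = col (dlt m (h j)) 0"
    using c by metis
  define f where "f j = h j - 1" for j
  have "rng m n f" using h by (auto simp: rng_def f_def)
  moreover have "A = Lm m n f"
  proof (rule eq_matI)
    fix i j assume ij: "i < dim_row (Lm m n f)" "j < dim_col (Lm m n f)"
    hence "A $$ (i,j) = col A j $ i" using d by simp
    also have "\<dots> = col (dlt m (h j)) 0 $ i" using h ij by simp
    also have "\<dots> = Lm m n f $$ (i,j)" using ij by (simp add: dlt_def Lm_def f_def)
    finally show "A $$ (i,j) = Lm m n f $$ (i,j)" .
  qed (use d in auto)
  ultimately show ?thesis by blast
qed

lemma Lm_logical: assumes "rng m n f" shows "logical_mat m n (Lm m n f)"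
  unfolding logical_mat_def
proof (intro conjI allI impI)
  fix j assume j: "j < n"
  hence "f j < m" using assms by (auto simp: rng_def)
  moreover have "col (Lm m n f) j = col (dlt m (f j + 1)) 0"
    using j by (intro eq_vecI) (auto simp: Lm_def dlt_def)
  ultimately show "\<exists>i\<in>{1..m}. col (Lm m n f) j = col (dlt m i) 0" by (intro bexI[of _ "f j + 1"]) auto
qed auto

lemma stpf_at: "(v::nat) < r \<Longrightarrow> stpf r f g (u*r+v) = f (g u * r + v)"
  by (simp add: stpf_def)

lemma stpf_1: "stpf (Suc 0) f g j = f (g j)"
  by (simp add: stpf_def)

lemma kronf_at: "(v::nat) < q \<Longrightarrow> kronf p q f g (u*q+v) = f u * p + g v"
  by (simp add: kronf_def)

lemma lt2: "(b::nat) < k \<Longrightarrow> c < k \<Longrightarrow> b*k + c < k*k"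
proof -
  assume b: "b < k" and c: "c < k"
  from b have "Suc b \<le> k" by simp
  hence "Suc b * k \<le> k * k" by (rule mult_right_mono) simp
  thus ?thesis using c by simp
qed

lemma lt2': "(b::nat) < m \<Longrightarrow> c < k \<Longrightarrow> b*k + c < m*k"
proof -
  assume b: "b < m" and c: "c < k"
  from b have "Suc b \<le> m" by simp
  hence "Suc b * k \<le> m * k" by (rule mult_right_mono) simp
  thus ?thesis using c by simp
qed

lemma decomp2: assumes "(j::nat) < k*k" shows "\<exists>a b. a < k \<and> b < k \<and> j = a*k + b"
proof -
  have k: "0 < k" using assms by (cases k) auto
  show ?thesis
    by (rule exI[of _ "j div k"], rule exI[of _ "j mod k"])
       (use assms k in \<open>auto simp: less_mult_imp_div_less\<close>)
qed

lemma decomp3: assumes "(j::nat) < k*k*k" shows "\<exists>a b c. a < k \<and> b < k \<and> c < k \<and> j = (a*k + b)*k + c"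
proof -
  have k: "0 < k" using assms by (cases k) auto
  have "j div k < k*k" using assms by (simp add: less_mult_imp_div_less)
  then obtain a b where "a < k" "b < k" "j div k = a*k+b" using decomp2 by blast
  moreover have "j = (j div k)*k + j mod k" by simp
  moreover have "j mod k < k" using k by simp
  ultimately show ?thesis by metis
qed

lemma bridge1:
  fixes A :: "'a \<Rightarrow> nat" and k :: nat
  assumes inj: "inj A" and lt: "\<forall>x. A x < k" and su: "\<forall>c<k. \<exists>x. A x = c"
    and F: "\<forall>x. F (A x) = A (l x)" and G: "\<forall>x. G (A x) = A (r x)"
  shows "(\<forall>x. l x = r x) \<longleftrightarrow> (\<forall>j<k. F j = G j)"
proof
  assume h: "\<forall>x. l x = r x"
  show "\<forall>j<k. F j = G j"
  proof (intro allI impI)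
    fix j assume "j < k"
    then obtain x where "A x = j" using su by blast
    thus "F j = G j" using F G h by metis
  qed
next
  assume h: "\<forall>j<k. F j = G j"
  show "\<forall>x. l x = r x"
  proof
    fix x
    have "A (l x) = A (r x)" using h F G lt by metis
    thus "l x = r x" using inj by (simp add: inj_eq)
  qed
qed

lemma bridge2:
  fixes A :: "'a \<Rightarrow> nat" and k :: nat
  assumes inj: "inj A" and lt: "\<forall>x. A x < k" and su: "\<forall>c<k. \<exists>x. A x = c"
    and F: "\<forall>x y. F (A x * k + A y) = A (l x y)" and G: "\<forall>x y. G (A x * k + A y) = A (r x y)"
  shows "(\<forall>x y. l x y = r x y) \<longleftrightarrow> (\<forall>j<k*k. F j = G j)"
proof
  assume h: "\<forall>x y. l x y = r x y"
  show "\<forall>j<k*k. F j = G j"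
  proof (intro allI impI)
    fix j assume "j < k*k"
    then obtain a b where "a < k" "b < k" "j = a*k+b" using decomp2[OF \<open>j < k*k\<close>] by blast
    moreover obtain x y where "A x = a" "A y = b" using su \<open>a < k\<close> \<open>b < k\<close> by metis
    ultimately show "F j = G j" using F G h by metis
  qed
next
  assume h: "\<forall>j<k*k. F j = G j"
  show "\<forall>x y. l x y = r x y"
  proof (intro allI)
    fix x y
    have "A x * k + A y < k*k" using lt lt2 by blast
    hence "A (l x y) = A (r x y)" using h F G by metis
    thus "l x y = r x y" using inj by (simp add: inj_eq)
  qed
qed

lemma bridge3:
  fixes A :: "'a \<Rightarrow> nat" and k :: nat
  assumes inj: "inj A" and lt: "\<forall>x. A x < k" and su: "\<forall>c<k. \<exists>x. A x = c"
    and F: "\<forall>x y z. F ((A x * k + A y) * k + A z) = A (l x y z)"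
    and G: "\<forall>x y z. G ((A x * k + A y) * k + A z) = A (r x y z)"
  shows "(\<forall>x y z. l x y z = r x y z) \<longleftrightarrow> (\<forall>j<k*k*k. F j = G j)"
proof
  assume h: "\<forall>x y z. l x y z = r x y z"
  show "\<forall>j<k*k*k. F j = G j"
  proof (intro allI impI)
    fix j assume "j < k*k*k"
    then obtain a b c where "a < k" "b < k" "c < k" "j = (a*k+b)*k+c" using decomp3[OF \<open>j < k*k*k\<close>] by blast
    moreover obtain x y z where "A x = a" "A y = b" "A z = c"
      using su \<open>a < k\<close> \<open>b < k\<close> \<open>c < k\<close> by metis
    ultimately show "F j = G j" using F G h by metis
  qed
next
  assume h: "\<forall>j<k*k*k. F j = G j"
  show "\<forall>x y z. l x y z = r x y z"
  proof (intro allI)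
    fix x y z
    have "A x * k + A y < k*k" using lt lt2 by blast
    hence "(A x * k + A y) * k + A z < (k*k)*k" using lt
      by (intro lt2') auto
    hence "A (l x y z) = A (r x y z)" using h F G by metis
    thus "l x y z = r x y z" using inj by (simp add: inj_eq)
  qed
qed

lemma stpf_one: "stpf 1 f g j = f (g j)"
  by (simp add: stpf_def)

declare stpf_one[simp] stpf_1[simp]



theorem theorem3p1:
  fixes plus times :: "'a::finite \<Rightarrow> 'a \<Rightarrow> 'a"
    and lab :: "'a \<Rightarrow> nat" and k :: nat and Mp Mt :: "real mat"
  defines "vf \<equiv> (\<lambda>x. dlt k (lab x))"
  assumes card: "card (UNIV :: 'a set) = k"
    and lab: "bij_betw lab UNIV {1..k}"
    and Mp: "logical_mat k (k * k) Mp"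
    and Mp_str: "\<forall>x y. vf (plus x y) = Mp \<ltimes> vf x \<ltimes> vf y"
    and Mt: "logical_mat k (k * k) Mt"
    and Mt_str: "\<forall>x y. vf (times x y) = Mt \<ltimes> vf x \<ltimes> vf y"
  shows
    "((\<forall>x y. plus x y = plus y x) \<longleftrightarrow> Mp = Mp \<ltimes> swap_mat k k)
   \<and> ((\<forall>x y z. plus (plus x y) z = plus x (plus y z))
        \<longleftrightarrow> Mp \<ltimes> Mp = Mp \<ltimes> kron (1\<^sub>m k) Mp)
   \<and> ((\<forall>e x. vf e = dlt k k \<longrightarrow> plus e x = x \<and> plus x e = x)
        \<longleftrightarrow> Mp \<ltimes> dlt k k = 1\<^sub>m k \<and> Mp \<ltimes> swap_mat k k \<ltimes> dlt k k = 1\<^sub>m k)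
   \<and> ((\<forall>e. vf e = dlt k k \<longrightarrow> (\<forall>x. \<exists>y. plus x y = e))
        \<longleftrightarrow> (\<exists>neg :: 'a \<Rightarrow> 'a. \<exists>Mn. logical_mat k k Mn
               \<and> (\<forall>x. vf (neg x) = Mn \<ltimes> vf x)
               \<and> Mp \<ltimes> kron (1\<^sub>m k) Mn \<ltimes> pr_mat k = dlt k k \<ltimes> transpose_mat (ones k)))
   \<and> ((\<forall>x y z. times (times x y) z = times x (times y z))
        \<longleftrightarrow> Mt \<ltimes> Mt = Mt \<ltimes> kron (1\<^sub>m k) Mt)
   \<and> ((\<forall>u x. vf u = dlt k 1 \<longrightarrow> times u x = x \<and> times x u = x)
        \<longleftrightarrow> Mt \<ltimes> dlt k 1 = 1\<^sub>m k \<and> Mt \<ltimes> swap_mat k k \<ltimes> dlt k 1 = 1\<^sub>m k)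
   \<and> (((\<forall>x y z. times x (plus y z) = plus (times x y) (times x z))
        \<and> (\<forall>x y z. times (plus x y) z = plus (times x z) (times y z)))
        \<longleftrightarrow>
       (Mt \<ltimes> Mp = Mp \<ltimes> Mt \<ltimes> kron (1\<^sub>m (k * k)) Mt \<ltimes> kron (1\<^sub>m k) (swap_mat k k)
                     \<ltimes> kron (1\<^sub>m (k * k)) (pr_mat k)
        \<and> Mt \<ltimes> kron (1\<^sub>m k) Mp = Mp \<ltimes> Mt \<ltimes> kron (1\<^sub>m (k * k)) Mt
                     \<ltimes> kron (1\<^sub>m k) (swap_mat k k) \<ltimes> pr_mat k))"
proof -
  have labinj: "inj lab" and labimg: "lab ` UNIV = {1..k}" using lab by (auto simp: bij_betw_def)
  define A where "A x = lab x - 1" for x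
  have labr: "lab x \<in> {1..k}" for x using labimg by auto
  have Alt: "\<forall>x. A x < k"
  proof
    fix x show "A x < k" using labr[of x] by (auto simp: A_def)
  qed
  have Ainj: "inj A"
  proof (rule injI)
    fix x y assume "A x = A y"
    hence "lab x = lab y" using labr[of x] labr[of y] by (auto simp: A_def)
    thus "x = y" using labinj by (simp add: inj_eq)
  qed
  have Asu: "\<forall>c<k. \<exists>x. A x = c"
  proof (intro allI impI)
    fix c assume "c < k"
    hence "c + 1 \<in> lab ` UNIV" using labimg by auto
    then obtain x where "lab x = c + 1" by auto
    thus "\<exists>x. A x = c" by (intro exI[of _ x]) (simp add: A_def)
  qed
  have k0: "0 < k" using Alt by (metis not_less0 neq0_conv)
  have vfA: "vf x = Lm k 1 (\<lambda>_. A x)" for x by (simp add: vf_def dlt_Lm A_def)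
  have rngv: "rng k 1 (\<lambda>_. A x)" for x using Alt by (simp add: rng_def)
  have str: "\<forall>x y. f (A x * k + A y) = A (op x y)"
    if rf: "rng k (k*k) f" and h: "\<forall>x y. vf (op x y) = Lm k (k*k) f \<ltimes> vf x \<ltimes> vf y" for f op
  proof (intro allI)
    fix x y
    have 1: "Lm k (k*k) f \<ltimes> vf x = Lm k k (stpf k f (\<lambda>_. A x))"
      unfolding vfA by (rule stp_Lm[where r=k]) (use rngv k0 in auto)
    have 2: "rng k k (stpf k f (\<lambda>_. A x))"
      by (rule rng_stpf[where r=k, OF rf rngv]) auto
    have 3: "Lm k k (stpf k f (\<lambda>_. A x)) \<ltimes> vf y = Lm k 1 (stpf 1 (stpf k f (\<lambda>_. A x)) (\<lambda>_. A y))"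
      unfolding vfA by (rule stp_Lm[where r=1]) (use rngv k0 in auto)
    have "Lm k 1 (\<lambda>_. A (op x y)) = Lm k 1 (stpf 1 (stpf k f (\<lambda>_. A x)) (\<lambda>_. A y))"
      using h 1 3 vfA by metis
    hence "A (op x y) = stpf 1 (stpf k f (\<lambda>_. A x)) (\<lambda>_. A y) 0"
      using Lm_eq[OF rngv] by blast
    thus "f (A x * k + A y) = A (op x y)" using Alt by (simp add: stpf_def)
  qed
  obtain fp where fp: "rng k (k*k) fp" "Mp = Lm k (k*k) fp" using logical_Lm[OF Mp] by blast
  obtain ft where ft: "rng k (k*k) ft" "Mt = Lm k (k*k) ft" using logical_Lm[OF Mt] by blast
  have fps: "fp (A x * k + A y) = A (plus x y)" for x y using str[OF fp(1)] Mp_str fp(2) by metis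
  have fts: "ft (A x * k + A y) = A (times x y)" for x y using str[OF ft(1)] Mt_str ft(2) by metis

  define sw where "sw c = (c mod k) * k + c div k" for c
  define pr where "pr c = c * k + c" for c
  have swL: "swap_mat k k = Lm (k*k) (k*k) sw" by (simp add: swap_Lm sw_def[abs_def])
  have rsw: "rng (k*k) (k*k) sw" using rng_swap[of k k] by (simp add: sw_def[abs_def])
  have prL: "pr_mat k = Lm (k*k) k pr" by (simp add: pr_Lm pr_def[abs_def])
  have rpr: "rng (k*k) k pr" using rng_pr[of k] by (simp add: pr_def[abs_def])
  have swv: "sw (A x * k + A y) = A y * k + A x" for x y
  proof -
    have "A y < k" using Alt by blast
    thus ?thesis by (simp add: sw_def divmod_lt)
  qed
  have ltk: "A x * k + A y < k * k" for x y using Alt lt2 by blast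
  have j3s: "(a*k+b)*k+c = a*(k*k) + (b*k+c)" for a b c :: nat by (simp add: algebra_simps)
  have vfinj: "vf e = vf e' \<longleftrightarrow> e = e'" for e e'
  proof
    assume "vf e = vf e'"
    hence "A e = A e'" using Lm_eq[OF rngv[of e], of "\<lambda>_. A e'"] vfA by auto
    thus "e = e'" using Ainj by (simp add: inj_eq)
  qed simp
  have "k - 1 < k" using k0 by simp
  then obtain e0 where e0: "A e0 = k - 1" using Asu by blast
  obtain e1 where e1: "A e1 = 0" using Asu k0 by blast
  have de0: "dlt k k = vf e0" by (simp add: vfA dlt_Lm e0)
  have de1: "dlt k 1 = vf e1" by (simp add: vfA dlt_Lm e1)
  have one: "1\<^sub>m k = Lm k k (\<lambda>j. j)" by (rule one_Lm)

  have i1: "(\<forall>x y. plus x y = plus y x) \<longleftrightarrow> Mp = Mp \<ltimes> swap_mat k k"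
  proof -
    have M: "Mp \<ltimes> swap_mat k k = Lm k (k*k) (stpf 1 fp sw)"
      unfolding fp(2) swL by (rule stp_Lm[where r=1]) (use rsw k0 in auto)
    have "(\<forall>x y. plus x y = plus y x) \<longleftrightarrow> (\<forall>j<k*k. fp j = stpf 1 fp sw j)"
      by (rule bridge2[OF Ainj Alt Asu]) (auto simp: fps stpf_one swv)
    also have "\<dots> \<longleftrightarrow> Mp = Mp \<ltimes> swap_mat k k" using Lm_eq[OF fp(1)] M fp(2) by simp
    finally show ?thesis .
  qed

  have assoc: "(\<forall>x y z. op (op x y) z = op x (op y z)) \<longleftrightarrow> M \<ltimes> M = M \<ltimes> kron (1\<^sub>m k) M"
    if rf: "rng k (k*k) f" and fs: "\<And>x y. f (A x * k + A y) = A (op x y)" and M: "M = Lm k (k*k) f"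
    for f op M
  proof -
    have MM: "M \<ltimes> M = Lm k (k*k*k) (stpf k f f)"
      unfolding M by (rule stp_Lm[where r=k]) (use rf k0 in auto)
    have rMM: "rng k (k*k*k) (stpf k f f)" by (rule rng_stpf[where r=k, OF rf rf]) auto
    have K: "kron (1\<^sub>m k) M = Lm (k*k) (k*(k*k)) (kronf k (k*k) (\<lambda>j. j) f)"
      unfolding M one by (rule kron_Lm) (use rf k0 in auto)
    have rK: "rng (k*k) (k*(k*k)) (kronf k (k*k) (\<lambda>j. j) f)" by (rule rng_kronf[OF rng_id rf])
    have MK: "M \<ltimes> kron (1\<^sub>m k) M = Lm k (k*k*k) (stpf 1 f (kronf k (k*k) (\<lambda>j. j) f))"
      unfolding K unfolding M by (rule stp_Lm[where r=1]) (use rK k0 in \<open>auto simp: mult.assoc\<close>)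
    have "(\<forall>x y z. op (op x y) z = op x (op y z)) \<longleftrightarrow>
          (\<forall>j<k*k*k. stpf k f f j = stpf 1 f (kronf k (k*k) (\<lambda>j. j) f) j)"
    proof (rule bridge3[OF Ainj Alt Asu]; intro allI)
      fix x y z
      show "stpf k f f ((A x * k + A y) * k + A z) = A (op (op x y) z)"
        using Alt by (simp add: stpf_at fs)
      show "stpf 1 f (kronf k (k*k) (\<lambda>j. j) f) ((A x * k + A y) * k + A z) = A (op x (op y z))"
        using ltk[of y z] by (simp add: j3s stpf_one kronf_at fs)
    qed
    also have "\<dots> \<longleftrightarrow> M \<ltimes> M = M \<ltimes> kron (1\<^sub>m k) M" using Lm_eq[OF rMM] MM MK by simp
    finally show ?thesis .
  qed

  have ident: "(\<forall>e' x. vf e' = vf e \<longrightarrow> op e' x = x \<and> op x e' = x) \<longleftrightarrow>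
       M \<ltimes> vf e = 1\<^sub>m k \<and> M \<ltimes> swap_mat k k \<ltimes> vf e = 1\<^sub>m k"
    if rf: "rng k (k*k) f" and fs: "\<And>x y. f (A x * k + A y) = A (op x y)" and M: "M = Lm k (k*k) f"
    for f op M e
  proof -
    have L: "(\<forall>e' x. vf e' = vf e \<longrightarrow> op e' x = x \<and> op x e' = x) \<longleftrightarrow>
             (\<forall>x. op e x = x) \<and> (\<forall>x. op x e = x)" using vfinj by auto
    have M1: "M \<ltimes> vf e = Lm k k (stpf k f (\<lambda>_. A e))"
      unfolding M vfA by (rule stp_Lm[where r=k]) (use rngv k0 in auto)
    have r1: "rng k k (stpf k f (\<lambda>_. A e))" by (rule rng_stpf[where r=k, OF rf rngv]) auto
    have Ms: "M \<ltimes> swap_mat k k = Lm k (k*k) (stpf 1 f sw)"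
      unfolding M swL by (rule stp_Lm[where r=1]) (use rsw k0 in auto)
    have rs: "rng k (k*k) (stpf 1 f sw)" by (rule rng_stpf[where r=1, OF rf rsw]) auto
    have M2: "M \<ltimes> swap_mat k k \<ltimes> vf e = Lm k k (stpf k (stpf 1 f sw) (\<lambda>_. A e))"
      unfolding Ms vfA by (rule stp_Lm[where r=k]) (use rngv k0 in auto)
    have r2: "rng k k (stpf k (stpf 1 f sw) (\<lambda>_. A e))" by (rule rng_stpf[where r=k, OF rs rngv]) auto
    have "(\<forall>x. op e x = x) \<longleftrightarrow> (\<forall>j<k. stpf k f (\<lambda>_. A e) j = j)"
      by (rule bridge1[OF Ainj Alt Asu]) (use Alt in \<open>auto simp: stpf_def fs\<close>)
    also have "\<dots> \<longleftrightarrow> M \<ltimes> vf e = 1\<^sub>m k" using Lm_eq[OF r1] M1 one by simp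
    finally have A1: "(\<forall>x. op e x = x) \<longleftrightarrow> M \<ltimes> vf e = 1\<^sub>m k" .
    have "(\<forall>x. op x e = x) \<longleftrightarrow> (\<forall>j<k. stpf k (stpf 1 f sw) (\<lambda>_. A e) j = j)"
      by (rule bridge1[OF Ainj Alt Asu]) (use Alt in \<open>auto simp: stpf_def swv fs\<close>)
    also have "\<dots> \<longleftrightarrow> M \<ltimes> swap_mat k k \<ltimes> vf e = 1\<^sub>m k" using Lm_eq[OF r2] M2 one by simp
    finally have A2: "(\<forall>x. op x e = x) \<longleftrightarrow> M \<ltimes> swap_mat k k \<ltimes> vf e = 1\<^sub>m k" .
    show ?thesis using L A1 A2 by blast
  qed

  have i2: "(\<forall>x y z. plus (plus x y) z = plus x (plus y z)) \<longleftrightarrow> Mp \<ltimes> Mp = Mp \<ltimes> kron (1\<^sub>m k) Mp"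
    by (rule assoc[OF fp(1) fps fp(2)])
  have i5: "(\<forall>x y z. times (times x y) z = times x (times y z)) \<longleftrightarrow> Mt \<ltimes> Mt = Mt \<ltimes> kron (1\<^sub>m k) Mt"
    by (rule assoc[OF ft(1) fts ft(2)])
  have i3: "(\<forall>e x. vf e = dlt k k \<longrightarrow> plus e x = x \<and> plus x e = x)
        \<longleftrightarrow> Mp \<ltimes> dlt k k = 1\<^sub>m k \<and> Mp \<ltimes> swap_mat k k \<ltimes> dlt k k = 1\<^sub>m k"
    unfolding de0 by (rule ident[OF fp(1) fps fp(2)])
  have i6: "(\<forall>u x. vf u = dlt k 1 \<longrightarrow> times u x = x \<and> times x u = x)
        \<longleftrightarrow> Mt \<ltimes> dlt k 1 = 1\<^sub>m k \<and> Mt \<ltimes> swap_mat k k \<ltimes> dlt k 1 = 1\<^sub>m k"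
    unfolding de1 by (rule ident[OF ft(1) fts ft(2)])

  have Alt': "A x < k" for x using Alt by blast
  have Rm: "dlt k k \<ltimes> transpose_mat (ones k) = Lm k k (\<lambda>_. A e0)"
  proof -
    have "dlt k k \<ltimes> transpose_mat (ones k) = Lm k k (stpf 1 (\<lambda>_. A e0) (\<lambda>_. 0))"
      unfolding de0 vfA ones_Lm by (rule stp_Lm[where r=1]) (auto simp: rng_def)
    also have "stpf 1 (\<lambda>_. A e0) (\<lambda>_. 0) = (\<lambda>_. A e0)" by (simp add: fun_eq_iff stpf_one)
    finally show ?thesis .
  qed
  have rc: "rng k k (\<lambda>_. A e0)" using Alt' by (simp add: rng_def)
  have chainEq: "(Mp \<ltimes> kron (1\<^sub>m k) (Lm k k gn) \<ltimes> pr_mat k = dlt k k \<ltimes> transpose_mat (ones k))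
      \<longleftrightarrow> (\<forall>x. plus x (neg x) = e0)"
    if rg: "rng k k gn" and gs: "\<And>x. gn (A x) = A (neg x)" for gn neg
  proof -
    have K: "kron (1\<^sub>m k) (Lm k k gn) = Lm (k*k) (k*k) (kronf k k (\<lambda>j. j) gn)"
      unfolding one by (rule kron_Lm) (use rg k0 in auto)
    have rK: "rng (k*k) (k*k) (kronf k k (\<lambda>j. j) gn)" by (rule rng_kronf[OF rng_id rg])
    have C1: "Mp \<ltimes> kron (1\<^sub>m k) (Lm k k gn) = Lm k (k*k) (stpf 1 fp (kronf k k (\<lambda>j. j) gn))"
      unfolding K fp(2) by (rule stp_Lm[where r=1]) (use rK k0 in auto)
    have r1: "rng k (k*k) (stpf 1 fp (kronf k k (\<lambda>j. j) gn))"
      by (rule rng_stpf[where r=1, OF fp(1) rK]) auto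
    have C2: "Mp \<ltimes> kron (1\<^sub>m k) (Lm k k gn) \<ltimes> pr_mat k
       = Lm k k (stpf 1 (stpf 1 fp (kronf k k (\<lambda>j. j) gn)) pr)"
      unfolding C1 prL by (rule stp_Lm[where r=1]) (use rpr k0 in auto)
    have "(\<forall>x. plus x (neg x) = e0) \<longleftrightarrow> (\<forall>j<k. stpf 1 (stpf 1 fp (kronf k k (\<lambda>j. j) gn)) pr j = A e0)"
      by (rule bridge1[OF Ainj Alt Asu]) (auto simp: stpf_one pr_def kronf_at Alt' gs fps)
    also have "\<dots> \<longleftrightarrow> Lm k k (\<lambda>_. A e0) = Lm k k (stpf 1 (stpf 1 fp (kronf k k (\<lambda>j. j) gn)) pr)"
      using Lm_eq[OF rc] by auto
    finally show ?thesis using C2 Rm by auto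
  qed
  have negstr: "(\<forall>x. vf (neg x) = Lm k k gn \<ltimes> vf x) \<longleftrightarrow> (\<forall>x. gn (A x) = A (neg x))"
    if rg: "rng k k gn" for gn neg
  proof -
    have E: "Lm k k gn \<ltimes> vf x = Lm k 1 (stpf 1 gn (\<lambda>_. A x))" for x
      unfolding vfA by (rule stp_Lm[where r=1]) (use rngv k0 in auto)
    have "vf (neg x) = Lm k k gn \<ltimes> vf x \<longleftrightarrow> gn (A x) = A (neg x)" for x
      using Lm_eq[OF rngv[of "neg x"], of "stpf 1 gn (\<lambda>_. A x)"] E[of x] vfA[of "neg x"]
      by (auto simp: stpf_one)
    thus ?thesis by blast
  qed
  have i4: "(\<forall>e. vf e = dlt k k \<longrightarrow> (\<forall>x. \<exists>y. plus x y = e))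
        \<longleftrightarrow> (\<exists>neg :: 'a \<Rightarrow> 'a. \<exists>Mn. logical_mat k k Mn
               \<and> (\<forall>x. vf (neg x) = Mn \<ltimes> vf x)
               \<and> Mp \<ltimes> kron (1\<^sub>m k) Mn \<ltimes> pr_mat k = dlt k k \<ltimes> transpose_mat (ones k))"
  proof
    assume "\<forall>e. vf e = dlt k k \<longrightarrow> (\<forall>x. \<exists>y. plus x y = e)"
    hence "\<forall>x. \<exists>y. plus x y = e0" using de0 by auto
    then obtain neg where neg: "\<forall>x. plus x (neg x) = e0" by metis
    define ai where "ai c = (SOME x. A x = c)" for c
    have ai: "ai (A x) = x" for x
    proof -
      have "A (ai (A x)) = A x" unfolding ai_def by (rule someI_ex) blast
      thus ?thesis using Ainj by (simp add: inj_eq)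
    qed
    define gn where "gn j = A (neg (ai j))" for j
    have rg: "rng k k gn" using Alt' by (simp add: rng_def gn_def)
    have gs: "gn (A x) = A (neg x)" for x by (simp add: gn_def ai)
    show "\<exists>neg :: 'a \<Rightarrow> 'a. \<exists>Mn. logical_mat k k Mn
               \<and> (\<forall>x. vf (neg x) = Mn \<ltimes> vf x)
               \<and> Mp \<ltimes> kron (1\<^sub>m k) Mn \<ltimes> pr_mat k = dlt k k \<ltimes> transpose_mat (ones k)"
      using Lm_logical[OF rg] negstr[OF rg, of neg] chainEq[OF rg gs] gs neg by blast
  next
    assume "\<exists>neg :: 'a \<Rightarrow> 'a. \<exists>Mn. logical_mat k k Mn
               \<and> (\<forall>x. vf (neg x) = Mn \<ltimes> vf x)
               \<and> Mp \<ltimes> kron (1\<^sub>m k) Mn \<ltimes> pr_mat k = dlt k k \<ltimes> transpose_mat (ones k)"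
    then obtain neg :: "'a \<Rightarrow> 'a" and Mn where Mn: "logical_mat k k Mn"
      and ns: "\<forall>x. vf (neg x) = Mn \<ltimes> vf x"
      and eq: "Mp \<ltimes> kron (1\<^sub>m k) Mn \<ltimes> pr_mat k = dlt k k \<ltimes> transpose_mat (ones k)" by blast
    obtain gn where rg: "rng k k gn" and MnL: "Mn = Lm k k gn" using logical_Lm[OF Mn] by blast
    have gs: "gn (A x) = A (neg x)" for x using negstr[OF rg, of neg] ns MnL by blast
    have "\<forall>x. plus x (neg x) = e0" using chainEq[OF rg gs] eq MnL by blast
    thus "\<forall>e. vf e = dlt k k \<longrightarrow> (\<forall>x. \<exists>y. plus x y = e)" using de0 vfinj by metis
  qed

  define P1f where "P1f = stpf k fp ft"
  define K1f where "K1f = kronf k (k*k) (\<lambda>j. j) ft"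
  define P2f where "P2f = stpf 1 P1f K1f"
  define K2f where "K2f = kronf (k*k) (k*k) (\<lambda>j. j) sw"
  define P3f where "P3f = stpf k P2f K2f"
  define K3f where "K3f = kronf (k*k) k (\<lambda>j. j) pr"
  have k2: "0 < k*k" using k0 by simp
  have P1: "Mp \<ltimes> Mt = Lm k (k*k*k) P1f"
    unfolding fp(2) ft(2) P1f_def by (rule stp_Lm[where r=k]) (use ft(1) k0 in auto)
  have rP1: "rng k (k*k*k) P1f" unfolding P1f_def by (rule rng_stpf[where r=k, OF fp(1) ft(1)]) auto
  have K1: "kron (1\<^sub>m (k*k)) Mt = Lm (k*k*k) (k*k*(k*k)) K1f"
    unfolding ft(2) one_Lm K1f_def by (rule kron_Lm) (use ft(1) k0 in auto)
  have rK1: "rng (k*k*k) (k*k*(k*k)) K1f" unfolding K1f_def by (rule rng_kronf[OF rng_id ft(1)])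
  have P2: "Mp \<ltimes> Mt \<ltimes> kron (1\<^sub>m (k*k)) Mt = Lm k (k*k*(k*k)) P2f"
    unfolding P1 K1 P2f_def by (rule stp_Lm[where r=1]) (use rK1 k0 in auto)
  have rP2: "rng k (k*k*(k*k)) P2f" unfolding P2f_def by (rule rng_stpf[where r=1, OF rP1 rK1]) auto
  have K2: "kron (1\<^sub>m k) (swap_mat k k) = Lm (k*(k*k)) (k*(k*k)) K2f"
    unfolding swL one K2f_def by (rule kron_Lm) (use rsw k0 in auto)
  have rK2: "rng (k*(k*k)) (k*(k*k)) K2f" unfolding K2f_def by (rule rng_kronf[OF rng_id rsw])
  have P3: "Mp \<ltimes> Mt \<ltimes> kron (1\<^sub>m (k*k)) Mt \<ltimes> kron (1\<^sub>m k) (swap_mat k k) = Lm k (k*k*k*k) P3f"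
    unfolding P2 K2 P3f_def by (rule stp_Lm[where r=k]) (use rK2 k0 in \<open>auto simp: ac_simps\<close>)
  have rP3: "rng k (k*k*k*k) P3f" unfolding P3f_def
    by (rule rng_stpf[where r=k, OF rP2 rK2]) (auto simp: ac_simps)
  have K3: "kron (1\<^sub>m (k*k)) (pr_mat k) = Lm (k*k*(k*k)) (k*k*k) K3f"
    unfolding prL one_Lm K3f_def by (rule kron_Lm) (use rpr k0 in auto)
  have rK3: "rng (k*k*(k*k)) (k*k*k) K3f" unfolding K3f_def by (rule rng_kronf[OF rng_id rpr])
  have Ra: "Mp \<ltimes> Mt \<ltimes> kron (1\<^sub>m (k*k)) Mt \<ltimes> kron (1\<^sub>m k) (swap_mat k k) \<ltimes> kron (1\<^sub>m (k*k)) (pr_mat k)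
      = Lm k (k*k*k) (stpf 1 P3f K3f)"
    unfolding P3 K3 by (rule stp_Lm[where r=1]) (use rK3 k0 in \<open>auto simp: ac_simps\<close>)
  have Rb: "Mp \<ltimes> Mt \<ltimes> kron (1\<^sub>m (k*k)) Mt \<ltimes> kron (1\<^sub>m k) (swap_mat k k) \<ltimes> pr_mat k
      = Lm k (k*k*k) (stpf (k*k) P3f pr)"
    unfolding P3 prL by (rule stp_Lm[where r="k*k"]) (use rpr k0 in \<open>auto simp: ac_simps\<close>)
  have La: "Mt \<ltimes> Mp = Lm k (k*k*k) (stpf k ft fp)"
    unfolding fp(2) ft(2) by (rule stp_Lm[where r=k]) (use fp(1) k0 in auto)
  have rLa: "rng k (k*k*k) (stpf k ft fp)" by (rule rng_stpf[where r=k, OF ft(1) fp(1)]) auto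
  have KMp: "kron (1\<^sub>m k) Mp = Lm (k*k) (k*(k*k)) (kronf k (k*k) (\<lambda>j. j) fp)"
    unfolding fp(2) one by (rule kron_Lm) (use fp(1) k0 in auto)
  have rKMp: "rng (k*k) (k*(k*k)) (kronf k (k*k) (\<lambda>j. j) fp)" by (rule rng_kronf[OF rng_id fp(1)])
  have Lb: "Mt \<ltimes> kron (1\<^sub>m k) Mp = Lm k (k*k*k) (stpf 1 ft (kronf k (k*k) (\<lambda>j. j) fp))"
    unfolding KMp ft(2) by (rule stp_Lm[where r=1]) (use rKMp k0 in \<open>auto simp: mult.assoc\<close>)
  have rLb: "rng k (k*k*k) (stpf 1 ft (kronf k (k*k) (\<lambda>j. j) fp))"
    by (rule rng_stpf[where r=1, OF ft(1) rKMp]) (auto simp: mult.assoc)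
  have eP1: "P1f (u*k + v) = fp (ft u * k + v)" if "v < k" for u v
    using that by (simp add: P1f_def stpf_at)
  have eK1: "K1f (u*(k*k) + w) = u*k + ft w" if "w < k*k" for u w
    using that by (simp add: K1f_def kronf_at)
  have eP2: "P2f j = P1f (K1f j)" for j by (simp add: P2f_def stpf_one)
  have eK2: "K2f (u*(k*k) + w) = u*(k*k) + sw w" if "w < k*k" for u w
    using that by (simp add: K2f_def kronf_at)
  have eP3: "P3f (u*k + v) = P2f (K2f u * k + v)" if "v < k" for u v
    using that by (simp add: P3f_def stpf_at)
  have eK3: "K3f (u*k + v) = u*(k*k) + pr v" if "v < k" for u v
    using that by (simp add: K3f_def kronf_at)
  have evRa: "stpf 1 P3f K3f ((A x*k + A y)*k + A z) = A (plus (times x z) (times y z))" for x y z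
  proof -
    define a b c where "a = A x" and "b = A y" and "c = A z"
    have abc: "a < k" "b < k" "c < k" using Alt' unfolding a_def b_def c_def by auto
    have "stpf 1 P3f K3f ((a*k + b)*k + c) = P3f ((a*k+b)*(k*k) + pr c)"
      using abc by (simp add: stpf_one eK3)
    also have "(a*k+b)*(k*k) + pr c = ((a*k+b)*k + c)*k + c" by (simp add: pr_def algebra_simps)
    also have "P3f (((a*k+b)*k + c)*k + c) = P2f (K2f ((a*k+b)*k + c) * k + c)" using abc by (simp add: eP3)
    also have "K2f ((a*k+b)*k + c) = a*(k*k) + (c*k+b)"
      using abc ltk[of y z] unfolding a_def b_def c_def by (simp add: j3s eK2 swv)
    also have "(a*(k*k) + (c*k+b))*k + c = (a*k+c)*(k*k) + (b*k+c)" by (simp add: algebra_simps)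
    also have "P2f ((a*k+c)*(k*k) + (b*k+c)) = P1f ((a*k+c)*k + ft (b*k+c))"
      using ltk[of y z] unfolding a_def b_def c_def by (simp add: eP2 eK1)
    also have "\<dots> = A (plus (times x z) (times y z))"
      using Alt' unfolding a_def b_def c_def by (simp add: eP1 fts fps)
    finally show ?thesis unfolding a_def b_def c_def .
  qed
  have evRb: "stpf (k*k) P3f pr ((A x*k + A y)*k + A z) = A (plus (times x y) (times x z))" for x y z
  proof -
    define a b c where "a = A x" and "b = A y" and "c = A z"
    have abc: "a < k" "b < k" "c < k" using Alt' unfolding a_def b_def c_def by auto
    have "stpf (k*k) P3f pr ((a*k + b)*k + c) = P3f (pr a * (k*k) + (b*k+c))"
      using abc lt2[of b k c] by (simp add: j3s stpf_at)
    also have "pr a * (k*k) + (b*k+c) = ((a*k+a)*k + b)*k + c" by (simp add: pr_def algebra_simps)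
    also have "P3f (((a*k+a)*k + b)*k + c) = P2f (K2f ((a*k+a)*k + b) * k + c)" using abc by (simp add: eP3)
    also have "K2f ((a*k+a)*k + b) = a*(k*k) + (b*k+a)"
      using abc ltk[of x y] unfolding a_def b_def c_def by (simp add: j3s eK2 swv)
    also have "(a*(k*k) + (b*k+a))*k + c = (a*k+b)*(k*k) + (a*k+c)" by (simp add: algebra_simps)
    also have "P2f ((a*k+b)*(k*k) + (a*k+c)) = P1f ((a*k+b)*k + ft (a*k+c))"
      using ltk[of x z] unfolding a_def b_def c_def by (simp add: eP2 eK1)
    also have "\<dots> = A (plus (times x y) (times x z))"
      using Alt' unfolding a_def b_def c_def by (simp add: eP1 fts fps)
    finally show ?thesis unfolding a_def b_def c_def .
  qed
  have evLa: "stpf k ft fp ((A x*k + A y)*k + A z) = A (times (plus x y) z)" for x y z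
    using Alt' by (simp add: stpf_at fps fts)
  have evLb: "stpf 1 ft (kronf k (k*k) (\<lambda>j. j) fp) ((A x*k + A y)*k + A z) = A (times x (plus y z))" for x y z
    using ltk[of y z] by (simp add: j3s stpf_one kronf_at fps fts)
  have da: "(\<forall>x y z. times (plus x y) z = plus (times x z) (times y z)) \<longleftrightarrow>
      Mt \<ltimes> Mp = Mp \<ltimes> Mt \<ltimes> kron (1\<^sub>m (k * k)) Mt \<ltimes> kron (1\<^sub>m k) (swap_mat k k)
                     \<ltimes> kron (1\<^sub>m (k * k)) (pr_mat k)"
  proof -
    have "(\<forall>x y z. times (plus x y) z = plus (times x z) (times y z)) \<longleftrightarrow>
          (\<forall>j<k*k*k. stpf k ft fp j = stpf 1 P3f K3f j)"
      by (rule bridge3[OF Ainj Alt Asu]) (simp_all only: evLa evRa simp_thms)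
    thus ?thesis using Lm_eq[OF rLa] La Ra by simp
  qed
  have db: "(\<forall>x y z. times x (plus y z) = plus (times x y) (times x z)) \<longleftrightarrow>
      Mt \<ltimes> kron (1\<^sub>m k) Mp = Mp \<ltimes> Mt \<ltimes> kron (1\<^sub>m (k * k)) Mt
                     \<ltimes> kron (1\<^sub>m k) (swap_mat k k) \<ltimes> pr_mat k"
  proof -
    have "(\<forall>x y z. times x (plus y z) = plus (times x y) (times x z)) \<longleftrightarrow>
          (\<forall>j<k*k*k. stpf 1 ft (kronf k (k*k) (\<lambda>j. j) fp) j = stpf (k*k) P3f pr j)"
      by (rule bridge3[OF Ainj Alt Asu]) (simp_all only: evLb evRb simp_thms)
    thus ?thesis using Lm_eq[OF rLb] Lb Rb by simp
  qed
  show ?thesis using i1 i2 i3 i4 i5 i6 da db by blast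
qed

end
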